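(* Let $f:\mathbb{R}^n\to\mathbb{R}^m$ be an asymptotically affine function. For any $\epsilon>0$ there exist a compact set $K\subset\mathbb{R}^n$ and a function $F:\mathbb{R}^n\to\mathbb{R}^m$ such that: (1) $F$ is the feedforward function of a radial neural network whose hidden widths are $(n+1,n+2,\dots,n+N)$, i.e. whose widths vector is $(n,n+1,\dots,n+N,m)$, where $N=N(f,K,\epsilon)$; (2) $|F(x)-f(x)|<\epsilon$ for every $x\in\mathbb{R}^n$.
   Context: For $c\in\mathbb{R}^n$ and $r>0$, $B_r(c)=\{x\in\mathbb{R}^n: |x-c|<r\}$. An affine map $\mathbb{R}^n\to\mathbb{R}^m$ is one of the form $x\mapsto Ax+b$. A continuous $f:\mathbb{R}^n\to\mathbb{R}^m$ is asymptotically affine if there is an affine map $L:\mathbb{R}^n\to\mathbb{R}^m$ such that for every $\epsilon>0$ there is a compact $K\subset\mathbb{R}^n$ with $|L(x)-f(x)|<\epsilon$ for all $x\in\mathbb{R}^n\setminus K$. For a compact $K\subset\mathbb{R}^n$, a continuous $f$ defined on $K$ (or on $\mathbb{R}^n$, in which case one uses its restriction to $K$) and $\epsilon>0$, $N(f,K,\epsilon)$ denotes the minimal $N$ such that there exist $c_1,\dots,c_N\in K$ and $r_1,\dots,r_N\in(0,1)$ with $K\subseteq\bigcup_i B_{r_i}(c_i)$ and $f(B_{r_i}(c_i)\cap K)\subseteq B_\epsilon(f(c_i))$ for all $i$. For a function $h:\mathbb{R}\to\mathbb{R}$ and $n\ge1$, $h^{(n)}:\mathbb{R}^n\to\mathbb{R}^n$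 is $h^{(n)}(v)=h(|v|)\,v/|v|$ for $v\neq0$ and $h^{(n)}(0)=0$; a radial rescaling function on $\mathbb{R}^n$ is a map of the form $h^{(n)}$ with $h$ piecewise differentiable. A radial neural network with widths vector $(n_0,\dots,n_L)$ consists of weights $W_i\in\mathbb{R}^{n_i\times n_{i-1}}$, biases $b_i\in\mathbb{R}^{n_i}$ and radial rescaling functions $\rho_i:\mathbb{R}^{n_i}\to\mathbb{R}^{n_i}$, $i=1,\dots,L$; its hidden widths are $(n_1,\dots,n_{L-1})$. Its feedforward function is $F=F_L$ where $F_0=\mathrm{id}_{\mathbb{R}^{n_0}}$ and $F_i(x)=\rho_i(W_iF_{i-1}(x)+b_i)$. *)

theory Defs
  imports "HOL-Analysis.Analysis"
begin

text \<open>Convention: a vector of R^k is represented as a function nat => real that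
  vanishes at all indices i >= k (zero padding). This uniform carrier is needed
  because the statement involves spaces R^(n+1), ..., R^(n+N) of varying dimension.
  On vecs k the product topology of nat => real coincides with the Euclidean one.\<close>

definition vecs :: "nat \<Rightarrow> (nat \<Rightarrow> real) set" where
  "vecs k = {v. \<forall>i\<ge>k. v i = 0}"

definition vnorm :: "nat \<Rightarrow> (nat \<Rightarrow> real) \<Rightarrow> real" where
  "vnorm k v = sqrt (\<Sum>i<k. (v i)\<^sup>2)"

definition vball :: "nat \<Rightarrow> (nat \<Rightarrow> real) \<Rightarrow> real \<Rightarrow> (nat \<Rightarrow> real) set" where
  "vball k c r = {x \<in> vecs k. vnorm k (\<lambda>j. x j - c j) < r}"

definition affine_app :: "nat \<Rightarrow> nat \<Rightarrow> (nat \<Rightarrow> nat \<Rightarrow> real) \<Rightarrow> (nat \<Rightarrow> real)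
    \<Rightarrow> (nat \<Rightarrow> real) \<Rightarrow> (nat \<Rightarrow> real)" where
  "affine_app a b A c x = (\<lambda>i. if i < b then (\<Sum>j<a. A i j * x j) + c i else 0)"

definition asymptotically_affine ::
    "nat \<Rightarrow> nat \<Rightarrow> ((nat \<Rightarrow> real) \<Rightarrow> (nat \<Rightarrow> real)) \<Rightarrow> bool" where
  "asymptotically_affine n m f \<longleftrightarrow>
     (\<forall>x\<in>vecs n. f x \<in> vecs m) \<and> continuous_on (vecs n) f \<and>
     (\<exists>A c. \<forall>\<epsilon>>0. \<exists>K. K \<subseteq> vecs n \<and> compact K \<and>
        (\<forall>x\<in>vecs n - K. vnorm m (\<lambda>i. affine_app n m A c x i - f x i) < \<epsilon>))"

definition good_cover ::
    "nat \<Rightarrow> nat \<Rightarrow> ((nat \<Rightarrow> real) \<Rightarrow> (nat \<Rightarrow> real)) \<Rightarrow> (nat \<Rightarrow> real) set \<Rightarrow> real \<Rightarrow> nat \<Rightarrow> bool" where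
  "good_cover n m f K \<epsilon> N \<longleftrightarrow>
     (\<exists>c r. (\<forall>i<N. c i \<in> K \<and> 0 < r i \<and> r i < 1) \<and>
            K \<subseteq> (\<Union>i<N. vball n (c i) (r i)) \<and>
            (\<forall>i<N. \<forall>x \<in> vball n (c i) (r i) \<inter> K. vnorm m (\<lambda>j. f x j - f (c i) j) < \<epsilon>))"

definition Ncov ::
    "nat \<Rightarrow> nat \<Rightarrow> ((nat \<Rightarrow> real) \<Rightarrow> (nat \<Rightarrow> real)) \<Rightarrow> (nat \<Rightarrow> real) set \<Rightarrow> real \<Rightarrow> nat" where
  "Ncov n m f K \<epsilon> = (LEAST N. good_cover n m f K \<epsilon> N)"

text \<open>Piecewise differentiable h : R -> R: R splits into finitely many intervals
  on whose interiors h is differentiable, i.e. h is differentiable outside a finite set.\<close>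
definition piecewise_diff :: "(real \<Rightarrow> real) \<Rightarrow> bool" where
  "piecewise_diff h \<longleftrightarrow> (\<exists>T. finite T \<and> (\<forall>x. x \<notin> T \<longrightarrow> h differentiable (at x)))"

definition radial :: "nat \<Rightarrow> (real \<Rightarrow> real) \<Rightarrow> (nat \<Rightarrow> real) \<Rightarrow> (nat \<Rightarrow> real)" where
  "radial k h v = (if vnorm k v = 0 then (\<lambda>_. 0)
                   else (\<lambda>i. if i < k then h (vnorm k v) / vnorm k v * v i else 0))"

fun feedforward :: "nat list \<Rightarrow> ((nat \<Rightarrow> nat \<Rightarrow> real) \<times> (nat \<Rightarrow> real) \<times> (real \<Rightarrow> real)) list
    \<Rightarrow> (nat \<Rightarrow> real) \<Rightarrow> (nat \<Rightarrow> real)" where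
  "feedforward (n0 # n1 # ns) ((W, b, h) # ls) x =
     feedforward (n1 # ns) ls (radial n1 h (affine_app n0 n1 W b x))"
| "feedforward _ _ x = x"

definition is_radial_nn_function :: "nat list \<Rightarrow> ((nat \<Rightarrow> real) \<Rightarrow> (nat \<Rightarrow> real)) \<Rightarrow> bool" where
  "is_radial_nn_function ws F \<longleftrightarrow>
     (\<exists>layers. length ws = length layers + 1 \<and>
        (\<forall>(W, b, h) \<in> set layers. piecewise_diff h) \<and>
        (\<forall>x \<in> vecs (hd ws). F x = feedforward ws layers x))"

end

theory Submission
  imports Defs
begin

lemma vnorm_nonneg: "vnorm k v \<ge> 0"
  unfolding vnorm_def by (simp add: sum_nonneg)

lemma vnorm_sq: "(vnorm k v)^2 = (\<Sum>i<k. (v i)^2)"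
  unfolding vnorm_def by (simp add: sum_nonneg)

lemma vnorm_coord: assumes "i < k" shows "\<bar>v i\<bar> \<le> vnorm k v"
proof -
  have "(v i)^2 \<le> (\<Sum>j<k. (v j)^2)"
    using assms by (intro member_le_sum) auto
  then show ?thesis unfolding vnorm_def using real_sqrt_le_mono by fastforce
qed

lemma vnorm_cong: "(\<And>i. i < k \<Longrightarrow> u i = v i) \<Longrightarrow> vnorm k u = vnorm k v"
  unfolding vnorm_def by simp

lemma vnorm_sym: "vnorm k (\<lambda>i. a i - b i) = vnorm k (\<lambda>i. b i - a i)"
  unfolding vnorm_def by (simp add: power2_commute)

lemma vnorm_zero: "vnorm k (\<lambda>i. 0) = 0"
  unfolding vnorm_def by simp

lemma vnorm_eq0: "vnorm k v = 0 \<Longrightarrow> i < k \<Longrightarrow> v i = 0"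
  using vnorm_coord[of i k v] by auto

lemma cont_vnorm: "continuous_on UNIV (\<lambda>x::nat\<Rightarrow>real. vnorm k (\<lambda>i. x i - y i))"
  unfolding vnorm_def by (intro continuous_intros continuous_on_product_coordinates)

lemma cont_vnorm0: "continuous_on UNIV (\<lambda>x::nat\<Rightarrow>real. vnorm k x)"
  unfolding vnorm_def by (intro continuous_intros continuous_on_product_coordinates)

lemma cont_eps:
  fixes f :: "(nat \<Rightarrow> real) \<Rightarrow> (nat \<Rightarrow> real)"
  assumes "continuous_on (vecs n) f" "y \<in> vecs n" "\<epsilon> > 0"
  shows "\<exists>\<delta>>0. \<forall>x\<in>vecs n. vnorm n (\<lambda>i. x i - y i) < \<delta> \<longrightarrow> vnorm m (\<lambda>i. f x i - f y i) < \<epsilon>"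
proof -
  define U where "U = {u. vnorm m (\<lambda>i. u i - f y i) < \<epsilon>}"
  have oU: "open U" unfolding U_def
    by (rule open_Collect_less[OF cont_vnorm]) simp
  have fyU: "f y \<in> U" unfolding U_def using assms(3) by (simp add: vnorm_zero)
  have "continuous (at y within vecs n) f"
    using assms(1,2) continuous_on_eq_continuous_within by blast
  then obtain V where V: "open V" "y \<in> V" "\<forall>x\<in>vecs n. x \<in> V \<longrightarrow> f x \<in> U"
    using oU fyU unfolding continuous_within_topological by metis
  then obtain \<eta> where eta: "\<eta> > 0" "ball y \<eta> \<subseteq> V"
    using open_contains_ball by blast
  obtain N0 where N0: "(1/2::real)^N0 < \<eta>/2"
    using real_arch_pow_inv[of "\<eta>/2" "1/2::real"] eta by auto
  show ?thesis
  proof (intro exI[of _ "\<eta>/4"] conjI ballI impI)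
    show "\<eta>/4 > 0" using eta by simp
    fix x assume x: "x \<in> vecs n" and d: "vnorm n (\<lambda>i. x i - y i) < \<eta>/4"
    have le: "dist (x j) (y j) \<le> vnorm n (\<lambda>i. x i - y i)" for j
    proof (cases "j < n")
      case True then show ?thesis using vnorm_coord[OF True, of "\<lambda>i. x i - y i"] by (simp add: dist_real_def)
    next
      case False then show ?thesis using x assms(2) by (simp add: vecs_def vnorm_nonneg)
    qed
    have fin: "finite {dist (x (from_nat k)) (y (from_nat k)) |k. k \<le> N0}" by simp
    have "Max {dist (x (from_nat k)) (y (from_nat k)) |k. k \<le> N0} \<le> vnorm n (\<lambda>i. x i - y i)"
      using le fin by (subst Max_le_iff) auto
    then have "dist x y < \<eta>"
      using dist_fun_le_dist_first_terms[of x y N0] N0 d by linarith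
    then have "x \<in> V" using eta by (auto simp: dist_commute)
    then show "vnorm m (\<lambda>i. f x i - f y i) < \<epsilon>" using V x unfolding U_def by auto
  qed
qed


lemma compact_C:
  assumes "R \<ge> 0"
  shows "compact {x \<in> vecs n. vnorm n x \<le> R}"
proof -
  define S where "S = (\<lambda>i::nat. if i < n then {-R..R} else {0::real})"
  have "compactin (product_topology (\<lambda>i. euclidean) UNIV) (PiE UNIV S)"
    unfolding compactin_PiE S_def by auto
  then have cB: "compact (Pi UNIV S)"
    by (simp add: euclidean_product_topology PiE_UNIV_domain)
  have cl: "closed {x::nat\<Rightarrow>real. vnorm n x \<le> R}"
    by (rule closed_Collect_le[OF cont_vnorm0]) simp
  have eq: "{x \<in> vecs n. vnorm n x \<le> R} = Pi UNIV S \<inter> {x. vnorm n x \<le> R}"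
  proof (intro set_eqI iffI)
    fix x assume x: "x \<in> {x \<in> vecs n. vnorm n x \<le> R}"
    have "x i \<in> S i" for i
    proof (cases "i < n")
      case True then show ?thesis using vnorm_coord[OF True, of x] x by (auto simp: S_def)
    next
      case False then show ?thesis using x by (auto simp: S_def vecs_def)
    qed
    then show "x \<in> Pi UNIV S \<inter> {x. vnorm n x \<le> R}" using x by auto
  next
    fix x assume "x \<in> Pi UNIV S \<inter> {x. vnorm n x \<le> R}"
    then show "x \<in> {x \<in> vecs n. vnorm n x \<le> R}"
      by (auto simp: vecs_def S_def Pi_iff) (metis not_le singletonD)
  qed
  show ?thesis unfolding eq using cB cl by blast
qed

lemma compact_bound:
  assumes "compact (K::(nat\<Rightarrow>real) set)"
  shows "\<exists>R\<ge>0. \<forall>x\<in>K. vnorm n x \<le> R"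
proof -
  have "compact (vnorm n ` K)"
    using compact_continuous_image[OF continuous_on_subset[OF cont_vnorm0] assms] by blast
  then obtain a where "\<forall>y\<in>vnorm n ` K. \<bar>y\<bar> \<le> a"
    using compact_imp_bounded bounded_real by blast
  then show ?thesis by (intro exI[of _ "max a 0"]) auto
qed

lemma open_vb: "open {x::nat\<Rightarrow>real. vnorm n (\<lambda>i. x i - y i) < r}"
  by (rule open_Collect_less[OF cont_vnorm]) simp


definition sh :: "nat \<Rightarrow> (nat \<Rightarrow> nat \<Rightarrow> real) \<Rightarrow> nat \<Rightarrow> nat \<Rightarrow> real" where
  "sh n p k = (\<lambda>i. if i < n then - p k i else if i = n + k then 1 else 0)"

definition shp :: "nat \<Rightarrow> (nat \<Rightarrow> nat \<Rightarrow> real) \<Rightarrow> nat \<Rightarrow> nat \<Rightarrow> real" where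
  "shp n p k = (if k = 0 then (\<lambda>_. 0) else sh n p (k - 1))"

definition Pt :: "nat \<Rightarrow> (nat \<Rightarrow> nat \<Rightarrow> real) \<Rightarrow> nat \<Rightarrow> nat \<Rightarrow> real" where
  "Pt n p k = (\<lambda>i. if i < n then p k i else if i = n + k then -1 else 0)"

fun ust :: "nat \<Rightarrow> (nat \<Rightarrow> nat \<Rightarrow> real) \<Rightarrow> (nat \<Rightarrow> real) \<Rightarrow> nat \<Rightarrow> nat \<Rightarrow> (nat \<Rightarrow> real) \<Rightarrow> nat \<Rightarrow> real" where
  "ust n p rr M 0 x = x"
| "ust n p rr M (Suc k) x = (if k < M \<and> (\<forall>j<k. x \<notin> vball n (p j) (rr j)) \<and> x \<in> vball n (p k) (rr k)
     then Pt n p k else ust n p rr M k x)"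

lemma ust_class:
  "(ust n p rr M k x = x \<and> (\<forall>j<min k M. x \<notin> vball n (p j) (rr j))) \<or>
   (\<exists>j<min k M. x \<in> vball n (p j) (rr j) \<and> ust n p rr M k x = Pt n p j)"
proof (induction k)
  case 0 then show ?case by simp
next
  case (Suc k)
  show ?case
  proof (cases "k < M \<and> (\<forall>j<k. x \<notin> vball n (p j) (rr j)) \<and> x \<in> vball n (p k) (rr k)")
    case True
    then show ?thesis by (intro disjI2 exI[of _ k]) auto
  next
    case F: False
    then have e: "ust n p rr M (Suc k) x = ust n p rr M k x" by (simp only: ust.simps if_False)
    from Suc.IH show ?thesis
    proof
      assume a: "ust n p rr M k x = x \<and> (\<forall>j<min k M. x \<notin> vball n (p j) (rr j))"
      have "\<forall>j<min (Suc k) M. x \<notin> vball n (p j) (rr j)"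
      proof (intro allI impI)
        fix j assume j: "j < min (Suc k) M"
        show "x \<notin> vball n (p j) (rr j)"
        proof (cases "j < k")
          case True then show ?thesis using a j by auto
        next
          case False then have "j = k" "k < M" using j by auto
          then show ?thesis using F a by auto
        qed
      qed
      then show ?thesis using a e by auto
    next
      assume "\<exists>j<min k M. x \<in> vball n (p j) (rr j) \<and> ust n p rr M k x = Pt n p j"
      then obtain j where "j<min k M" "x \<in> vball n (p j) (rr j)" "ust n p rr M k x = Pt n p j" by blast
      then show ?thesis using e by (intro disjI2 exI[of _ j]) auto
    qed
  qed
qed

lemma radial_fix:
  assumes "v \<in> vecs w" "h (vnorm w v) = vnorm w v"
  shows "radial w h v = v"
proof (cases "vnorm w v = 0")
  case True
  have "v = (\<lambda>_. 0)"
  proof (rule ext)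
    fix i show "v i = 0"
    proof (cases "i < w")
      case True2: True show ?thesis using vnorm_eq0[OF True True2] .
    next
      case False then show ?thesis using assms(1) by (simp add: vecs_def)
    qed
  qed
  moreover have "radial w h v = (\<lambda>_. 0)" by (simp add: radial_def True)
  ultimately show ?thesis by simp
next
  case False
  then show ?thesis using assms unfolding radial_def vecs_def by (auto simp: fun_eq_iff)
qed

lemma radial_zero:
  assumes "h (vnorm w v) = 0"
  shows "radial w h v = (\<lambda>_. 0)"
  using assms unfolding radial_def by (auto simp: fun_eq_iff)

definition Idm :: "nat \<Rightarrow> nat \<Rightarrow> real" where "Idm i j = (if i = j then 1 else 0)"

lemma affine_Idm:
  "affine_app a b Idm c z = (\<lambda>i. if i < b then (if i < a then z i else 0) + c i else 0)"
proof -
  have "(\<Sum>j<a. Idm i j * z j) = (if i < a then z i else 0)" for i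
  proof -
    have "(\<Sum>j<a. Idm i j * z j) = (\<Sum>j<a. if i = j then z i else 0)"
      by (rule sum.cong) (auto simp: Idm_def)
    also have "\<dots> = (if i < a then z i else 0)" by (simp add: sum.delta)
    finally show ?thesis .
  qed
  then show ?thesis unfolding affine_app_def by auto
qed

lemma vecs_mono: "v \<in> vecs a \<Longrightarrow> a \<le> b \<Longrightarrow> v \<in> vecs b"
  unfolding vecs_def by auto

lemma Pt_vecs: "p k \<in> vecs n \<Longrightarrow> Pt n p k \<in> vecs (n + Suc k)"
  unfolding vecs_def Pt_def by auto

lemma sh_vecs: "sh n p k \<in> vecs (n + Suc k)"
  unfolding vecs_def sh_def by auto

lemma shp_vecs: "shp n p k \<in> vecs (n + k)"
  unfolding vecs_def shp_def sh_def by auto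

lemma ust_vecs:
  assumes "x \<in> vecs n" "\<forall>j<M. p j \<in> vecs n"
  shows "ust n p rr M k x \<in> vecs (n + k)"
  using ust_class[of n p rr M k x]
proof
  assume "ust n p rr M k x = x \<and> (\<forall>j<min k M. x \<notin> vball n (p j) (rr j))"
  then show ?thesis using assms vecs_mono[of x n "n+k"] by auto
next
  assume "\<exists>j<min k M. x \<in> vball n (p j) (rr j) \<and> ust n p rr M k x = Pt n p j"
  then obtain j where "j < min k M" "ust n p rr M k x = Pt n p j" by blast
  then show ?thesis using assms Pt_vecs[of p j n] vecs_mono[of _ "n + Suc j" "n+k"] by auto
qed

lemma sq_split:
  assumes "u \<in> vecs (n + k)"
  shows "(\<Sum>i<n+k+1. (u i + sh n p k i)^2) = (\<Sum>i<n. (u i - p k i)^2) + (\<Sum>i\<in>{n..<n+k}. (u i)^2) + 1"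
proof -
  have "(\<Sum>i<n+k+1. (u i + sh n p k i)^2) = (\<Sum>i<n+k. (u i + sh n p k i)^2) + (u (n+k) + sh n p k (n+k))^2"
    by simp
  also have "(u (n+k) + sh n p k (n+k))^2 = 1" using assms by (simp add: vecs_def sh_def)
  also have "(\<Sum>i<n+k. (u i + sh n p k i)^2) = (\<Sum>i<n. (u i + sh n p k i)^2) + (\<Sum>i\<in>{n..<n+k}. (u i + sh n p k i)^2)"
    by (subst sum.union_disjoint[symmetric]) (auto intro!: sum.cong)
  also have "(\<Sum>i<n. (u i + sh n p k i)^2) = (\<Sum>i<n. (u i - p k i)^2)"
    by (rule sum.cong) (auto simp: sh_def)
  also have "(\<Sum>i\<in>{n..<n+k}. (u i + sh n p k i)^2) = (\<Sum>i\<in>{n..<n+k}. (u i)^2)"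
    by (rule sum.cong) (auto simp: sh_def)
  finally show ?thesis .
qed


lemma sqrt_lt_iff': "0 \<le> r \<Longrightarrow> sqrt T < r \<longleftrightarrow> T < r^2"
  by (metis abs_of_nonneg real_sqrt_abs real_sqrt_less_iff)

definition hfun :: "real \<Rightarrow> real \<Rightarrow> real" where "hfun \<rho> t = (if t < \<rho> then 0 else t)"

definition rho :: "nat \<Rightarrow> (nat \<Rightarrow> real) \<Rightarrow> nat \<Rightarrow> real" where
  "rho M rr k = (if k < M then sqrt (1 + (rr k)^2) else 0)"

definition St where "St n p rr M k x = (\<lambda>i. ust n p rr M k x i + shp n p k i)"

lemma step:
  assumes x: "x \<in> vecs n" and P: "\<forall>j<M. p j \<in> vecs n \<and> 0 < rr j \<and> rr j < 1"
  shows "radial (n + Suc k) (hfun (rho M rr k))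
           (affine_app (n + k) (n + Suc k) Idm (\<lambda>i. sh n p k i - shp n p k i) (St n p rr M k x))
         = St n p rr M (Suc k) x"
proof -
  define u where "u = ust n p rr M k x"
  define V where "V = (\<lambda>i. u i + sh n p k i)"
  have uv: "u \<in> vecs (n + k)" unfolding u_def using ust_vecs x P by blast
  have shpv: "shp n p k \<in> vecs (n + k)" by (rule shp_vecs)
  have shv: "sh n p k \<in> vecs (n + Suc k)" by (rule sh_vecs)
  have aff: "affine_app (n + k) (n + Suc k) Idm (\<lambda>i. sh n p k i - shp n p k i) (St n p rr M k x) = V"
  proof (rule ext)
    fix i
    show "affine_app (n + k) (n + Suc k) Idm (\<lambda>i. sh n p k i - shp n p k i) (St n p rr M k x) i = V i"
      unfolding affine_Idm V_def St_def u_def[symmetric]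
      using uv shpv shv by (auto simp: vecs_def)
  qed
  have Vv: "V \<in> vecs (n + Suc k)" using uv shv by (auto simp: vecs_def V_def)
  have nV: "vnorm (n + Suc k) V = sqrt ((\<Sum>i<n. (u i - p k i)^2) + (\<Sum>i\<in>{n..<n+k}. (u i)^2) + 1)"
    unfolding vnorm_def V_def using sq_split[OF uv, of p] by simp
  show ?thesis
  proof (cases "k < M \<and> (\<forall>j<k. x \<notin> vball n (p j) (rr j)) \<and> x \<in> vball n (p k) (rr k)")
    case True
    have ux: "u = x"
      using ust_class[of n p rr M k x] True unfolding u_def by auto
    have mid: "(\<Sum>i\<in>{n..<n+k}. (u i)^2) = 0" using x ux by (auto simp: vecs_def)
    have rk: "0 < rr k" "rr k < 1" using P True by auto
    have "vnorm n (\<lambda>i. x i - p k i) < rr k" using True by (simp add: vball_def)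
    then have lt: "(\<Sum>i<n. (x i - p k i)^2) < (rr k)^2"
      unfolding vnorm_def using sqrt_lt_iff' rk by auto
    have "vnorm (n + Suc k) V < rho M rr k"
      unfolding nV mid rho_def using True lt ux by simp
    then have "radial (n + Suc k) (hfun (rho M rr k)) V = (\<lambda>_. 0)"
      by (intro radial_zero) (simp add: hfun_def)
    moreover have "St n p rr M (Suc k) x = (\<lambda>_. 0)"
      using True by (auto simp: St_def shp_def Pt_def sh_def fun_eq_iff)
    ultimately show ?thesis using aff by simp
  next
    case False
    have us: "ust n p rr M (Suc k) x = u" using False unfolding u_def by (simp only: ust.simps if_False)
    have StV: "St n p rr M (Suc k) x = V" unfolding St_def us V_def by (simp add: shp_def)
    have ge: "rho M rr k \<le> vnorm (n + Suc k) V"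
    proof (cases "k < M")
      case False then show ?thesis by (simp add: rho_def vnorm_nonneg)
    next
      case kM: True
      have rk: "0 < rr k" "rr k < 1" using P kM by auto
      have "1 + (rr k)^2 \<le> (\<Sum>i<n. (u i - p k i)^2) + (\<Sum>i\<in>{n..<n+k}. (u i)^2) + 1"
        using ust_class[of n p rr M k x]
      proof
        assume a: "ust n p rr M k x = x \<and> (\<forall>j<min k M. x \<notin> vball n (p j) (rr j))"
        then have ux: "u = x" and nb: "\<forall>j<k. x \<notin> vball n (p j) (rr j)" using kM u_def by auto
        then have "x \<notin> vball n (p k) (rr k)" using False kM by blast
        then have "\<not> vnorm n (\<lambda>i. x i - p k i) < rr k" using x by (simp add: vball_def)
        then have "(rr k)^2 \<le> (\<Sum>i<n. (x i - p k i)^2)"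
          unfolding vnorm_def using sqrt_lt_iff' rk by force
        moreover have "(\<Sum>i\<in>{n..<n+k}. (u i)^2) = 0" using x ux by (auto simp: vecs_def)
        ultimately show ?thesis using ux by simp
      next
        assume "\<exists>j<min k M. x \<in> vball n (p j) (rr j) \<and> ust n p rr M k x = Pt n p j"
        then obtain j where j: "j < k" "u = Pt n p j" unfolding u_def by auto
        have "(\<Sum>i\<in>{n..<n+k}. (u i)^2) = (\<Sum>i\<in>{n..<n+k}. if i = n + j then 1 else 0)"
          by (rule sum.cong) (auto simp: j Pt_def)
        also have "\<dots> = 1" using j by (simp add: sum.delta)
        finally have "(\<Sum>i\<in>{n..<n+k}. (u i)^2) = 1" .
        moreover have "0 \<le> (\<Sum>i<n. (u i - p k i)^2)" by (simp add: sum_nonneg)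
        moreover have "(rr k)^2 \<le> 1" using rk by (intro power_le_one) auto
        ultimately show ?thesis by simp
      qed
      then show ?thesis unfolding nV rho_def using kM by simp
    qed
    have "radial (n + Suc k) (hfun (rho M rr k)) V = V"
      by (rule radial_fix[OF Vv]) (use ge in \<open>simp add: hfun_def\<close>)
    then show ?thesis using aff StV by simp
  qed
qed


lemma pd_hfun: "piecewise_diff (hfun \<rho>)"
  unfolding piecewise_diff_def
proof (intro exI[of _ "{\<rho>}"] conjI allI impI)
  show "finite {\<rho>}" by simp
next
  fix t :: real assume "t \<notin> {\<rho>}"
  then consider "t < \<rho>" | "t > \<rho>" by force
  then show "hfun \<rho> differentiable (at t)"
  proof cases
    case 1
    have "(hfun \<rho> has_derivative (\<lambda>_. 0)) (at t)"
      by (rule has_derivative_transform_within_open[OF has_derivative_const open_lessThan, of t])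
         (use 1 in \<open>auto simp: hfun_def\<close>)
    then show ?thesis unfolding differentiable_def by blast
  next
    case 2
    have "(hfun \<rho> has_derivative (\<lambda>x. x)) (at t)"
      by (rule has_derivative_transform_within_open[OF has_derivative_ident open_greaterThan, of t])
         (use 2 in \<open>auto simp: hfun_def\<close>)
    then show ?thesis unfolding differentiable_def by blast
  qed
qed

lemma pd_id: "piecewise_diff id"
  unfolding piecewise_diff_def
  by (intro exI[of _ "{}"]) (auto simp: id_def differentiable_def intro: has_derivative_ident)

lemma ff_cons:
  "ws \<noteq> [] \<Longrightarrow> feedforward (a # ws) ((W, b, h) # ls) x = feedforward ws ls (radial (hd ws) h (affine_app a (hd ws) W b x))"
  by (cases ws) auto

lemma radial_id: "i < w \<Longrightarrow> radial w id v i = v i"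
  unfolding radial_def using vnorm_eq0[of w v i] by auto

lemma affine_shift:
  "i < b \<Longrightarrow> affine_app a b W bb (\<lambda>l. u l + s l) i = (\<Sum>l<a. W i l * u l) + (\<Sum>l<a. W i l * s l) + bb i"
  unfolding affine_app_def by (simp add: distrib_left sum.distrib)

lemma sum_split_nat: "(\<Sum>l<(n::nat)+N. g l) = (\<Sum>l<n. g l) + (\<Sum>l\<in>{n..<n+N}. (g l :: real))"
proof -
  have "{..<n+N} = {..<n} \<union> {n..<n+N}" by auto
  show ?thesis unfolding \<open>{..<n+N} = {..<n} \<union> {n..<n+N}\<close> by (rule sum.union_disjoint) auto
qed

definition Wf :: "nat \<Rightarrow> nat \<Rightarrow> (nat \<Rightarrow> nat \<Rightarrow> real) \<Rightarrow> (nat \<Rightarrow> real) \<Rightarrow> (nat \<Rightarrow> nat \<Rightarrow> real) \<Rightarrow> (nat \<Rightarrow> nat \<Rightarrow> real) \<Rightarrow> nat \<Rightarrow> nat \<Rightarrow> real" where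
  "Wf n M A c g p = (\<lambda>i j. if j < n then A i j else if j < n + M then
       - (g (j - n) i - (\<Sum>l<n. A i l * p (j - n) l) - c i) else 0)"

definition bf :: "nat \<Rightarrow> nat \<Rightarrow> nat \<Rightarrow> (nat \<Rightarrow> nat \<Rightarrow> real) \<Rightarrow> (nat \<Rightarrow> real) \<Rightarrow> (nat \<Rightarrow> nat \<Rightarrow> real) \<Rightarrow> (nat \<Rightarrow> nat \<Rightarrow> real) \<Rightarrow> nat \<Rightarrow> real" where
  "bf n N M A c g p = (\<lambda>i. c i - (\<Sum>l<n+N. Wf n M A c g p i l * shp n p N l))"

definition lay where
  "lay n p rr M = (\<lambda>k. (Idm, (\<lambda>i. sh n p k i - shp n p k i), hfun (rho M rr k)))"

lemma St0: "St n p rr M 0 x = x"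
  by (simp add: St_def shp_def)

lemma ff_ind:
  assumes x: "x \<in> vecs n" and P: "\<forall>j<M. p j \<in> vecs n \<and> 0 < rr j \<and> rr j < 1"
  shows "k \<le> N \<Longrightarrow> feedforward (map (\<lambda>i. n + i) [k..<N+1] @ [m])
            (map (lay n p rr M) [k..<N] @ [(W, b, id)]) (St n p rr M k x)
         = radial m id (affine_app (n + N) m W b (St n p rr M N x))"
proof (induction "N - k" arbitrary: k)
  case 0
  then have "k = N" by simp
  then show ?case by simp
next
  case (Suc d)
  then have kN: "k < N" by simp
  have e1: "[k..<N+1] = k # [Suc k..<N+1]" using kN by (simp add: upt_conv_Cons)
  have e2: "[k..<N] = k # [Suc k..<N]" using kN by (simp add: upt_conv_Cons)
  have e3: "[Suc k..<N+1] = Suc k # [Suc (Suc k)..<N+1]" using kN by (simp add: upt_conv_Cons)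
  define rest where "rest = map (\<lambda>i. n + i) [Suc k..<N+1] @ [m]"
  have w: "map (\<lambda>i. n + i) [k..<N+1] @ [m] = (n + k) # rest"
    unfolding rest_def by (simp only: e1 list.map append_Cons)
  have l: "map (lay n p rr M) [k..<N] @ [(W, b, id)] = lay n p rr M k # (map (lay n p rr M) [Suc k..<N] @ [(W, b, id)])"
    by (simp only: e2 list.map append_Cons)
  have hd: "hd rest = n + Suc k" unfolding rest_def by (simp only: e3 list.map append_Cons list.sel)
  have ne: "rest \<noteq> []" unfolding rest_def by simp
  have lk: "lay n p rr M k = (Idm, (\<lambda>i. sh n p k i - shp n p k i), hfun (rho M rr k))" by (simp add: lay_def)
  have "feedforward (map (\<lambda>i. n + i) [k..<N+1] @ [m])
            (map (lay n p rr M) [k..<N] @ [(W, b, id)]) (St n p rr M k x)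
      = feedforward (map (\<lambda>i. n + i) [Suc k..<N+1] @ [m])
            (map (lay n p rr M) [Suc k..<N] @ [(W, b, id)])
            (radial (n + Suc k) (hfun (rho M rr k))
              (affine_app (n + k) (n + Suc k) Idm (\<lambda>i. sh n p k i - shp n p k i) (St n p rr M k x)))"
    unfolding w l lk by (subst ff_cons[OF ne], simp only: hd, simp only: rest_def)
  also have "\<dots> = feedforward (map (\<lambda>i. n + i) [Suc k..<N+1] @ [m])
            (map (lay n p rr M) [Suc k..<N] @ [(W, b, id)]) (St n p rr M (Suc k) x)"
    using step[OF x P] by simp
  also have "\<dots> = radial m id (affine_app (n + N) m W b (St n p rr M N x))"
    using Suc kN by (intro Suc.hyps) auto
  finally show ?case .
qed


lemma network:
  assumes MN: "M \<le> N" and P: "\<forall>j<M. p j \<in> vecs n \<and> 0 < rr j \<and> rr j < 1"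
  shows "\<exists>F. is_radial_nn_function (map (\<lambda>i. n + i) [0..<N+1] @ [m]) F \<and>
    (\<forall>x\<in>vecs n. ((\<forall>j<M. x \<notin> vball n (p j) (rr j)) \<and> (\<forall>i<m. F x i = affine_app n m A c x i)) \<or>
                 (\<exists>j<M. x \<in> vball n (p j) (rr j) \<and> (\<forall>i<m. F x i = g j i)))"
proof -
  define W where "W = Wf n M A c g p"
  define b where "b = bf n N M A c g p"
  define ws where "ws = map (\<lambda>i. n + i) [0..<N+1] @ [m]"
  define ls where "ls = map (lay n p rr M) [0..<N] @ [(W, b, id)]"
  define F where "F = feedforward ws ls"
  have isnn: "is_radial_nn_function ws F"
    unfolding is_radial_nn_function_def
  proof (intro exI[of _ ls] conjI ballI)
    show "length ws = length ls + 1" unfolding ws_def ls_def by simp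
    show "\<And>y. y \<in> set ls \<Longrightarrow> case y of (W, b, h) \<Rightarrow> piecewise_diff h"
      unfolding ls_def lay_def using pd_hfun pd_id by auto
    show "\<And>x. x \<in> vecs (hd ws) \<Longrightarrow> F x = feedforward ws ls x" unfolding F_def by simp
  qed
  have val: "\<forall>i<m. F x i = (\<Sum>l<n+N. W i l * ust n p rr M N x l) + c i" if x: "x \<in> vecs n" for x
  proof (intro allI impI)
    fix i assume i: "i < m"
    have "F x = radial m id (affine_app (n + N) m W b (St n p rr M N x))"
      using ff_ind[OF x P, of 0 N m W b] unfolding F_def ws_def ls_def St0 by simp
    then have "F x i = affine_app (n + N) m W b (St n p rr M N x) i" using radial_id[OF i] by simp
    also have "\<dots> = (\<Sum>l<n+N. W i l * ust n p rr M N x l) + c i"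
      unfolding St_def affine_shift[OF i] b_def bf_def W_def by simp
    finally show "F x i = (\<Sum>l<n+N. W i l * ust n p rr M N x l) + c i" .
  qed
  have main: "((\<forall>j<M. x \<notin> vball n (p j) (rr j)) \<and> (\<forall>i<m. F x i = affine_app n m A c x i)) \<or>
                 (\<exists>j<M. x \<in> vball n (p j) (rr j) \<and> (\<forall>i<m. F x i = g j i))" if x: "x \<in> vecs n" for x
    using ust_class[of n p rr M N x]
  proof
    assume a: "ust n p rr M N x = x \<and> (\<forall>j<min N M. x \<notin> vball n (p j) (rr j))"
    have "F x i = affine_app n m A c x i" if i: "i < m" for i
    proof -
      have "(\<Sum>l<n+N. W i l * x l) = (\<Sum>l<n. W i l * x l) + (\<Sum>l\<in>{n..<n+N}. W i l * x l)"
        by (rule sum_split_nat)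
      also have "(\<Sum>l\<in>{n..<n+N}. W i l * x l) = 0" using x by (auto simp: vecs_def intro!: sum.neutral)
      also have "(\<Sum>l<n. W i l * x l) = (\<Sum>l<n. A i l * x l)" by (rule sum.cong) (auto simp: W_def Wf_def)
      finally show ?thesis using val[OF x] i a by (simp add: affine_app_def)
    qed
    then show ?thesis using a MN by (intro disjI1) (auto simp: min_def)
  next
    assume "\<exists>j<min N M. x \<in> vball n (p j) (rr j) \<and> ust n p rr M N x = Pt n p j"
    then obtain j where j: "j < M" "x \<in> vball n (p j) (rr j)" "ust n p rr M N x = Pt n p j" by auto
    have "F x i = g j i" if i: "i < m" for i
    proof -
      have "(\<Sum>l<n+N. W i l * Pt n p j l) = (\<Sum>l<n. W i l * Pt n p j l) + (\<Sum>l\<in>{n..<n+N}. W i l * Pt n p j l)"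
        by (rule sum_split_nat)
      also have "(\<Sum>l\<in>{n..<n+N}. W i l * Pt n p j l) = (\<Sum>l\<in>{n..<n+N}. if l = n + j then - W i (n + j) else 0)"
        by (rule sum.cong) (auto simp: Pt_def)
      also have "\<dots> = - W i (n + j)" using j MN by (simp add: sum.delta)
      also have "(\<Sum>l<n. W i l * Pt n p j l) = (\<Sum>l<n. A i l * p j l)" by (rule sum.cong) (auto simp: W_def Wf_def Pt_def)
      finally have "(\<Sum>l<n+N. W i l * Pt n p j l) = (\<Sum>l<n. A i l * p j l) - W i (n + j)" by simp
      moreover have "W i (n + j) = - (g j i - (\<Sum>l<n. A i l * p j l) - c i)" using j by (simp add: W_def Wf_def)
      ultimately show ?thesis using val[OF x] i j by simp
    qed
    then show ?thesis using j by blast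
  qed
  show ?thesis using isnn main unfolding ws_def by blast
qed


lemma coord0: "1 \<le> n \<Longrightarrow> \<bar>x 0 - y 0\<bar> \<le> vnorm n (\<lambda>i. x i - y i)"
  using vnorm_coord[of 0 n "\<lambda>i. x i - y i"] by simp

theorem theorem1:
  fixes n m :: nat and f :: "(nat \<Rightarrow> real) \<Rightarrow> (nat \<Rightarrow> real)" and \<epsilon> :: real
  assumes "n \<ge> 1" and "m \<ge> 1"
    and "asymptotically_affine n m f"
    and "\<epsilon> > 0"
  shows "\<exists>K F. K \<subseteq> vecs n \<and> compact K \<and>
           is_radial_nn_function
             (map (\<lambda>i. n + i) [0..<Ncov n m f K \<epsilon> + 1] @ [m]) F \<and>
           (\<forall>x \<in> vecs n. vnorm m (\<lambda>i. F x i - f x i) < \<epsilon>)"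
proof -
  note n1 = assms(1) and eps = assms(4)
  have cont: "continuous_on (vecs n) f" using assms(3) unfolding asymptotically_affine_def by blast
  obtain A c where Ac: "\<forall>\<epsilon>>0. \<exists>K. K \<subseteq> vecs n \<and> compact K \<and>
        (\<forall>x\<in>vecs n - K. vnorm m (\<lambda>i. affine_app n m A c x i - f x i) < \<epsilon>)"
    using assms(3) unfolding asymptotically_affine_def by blast
  obtain K0 where K0: "K0 \<subseteq> vecs n" "compact K0"
    "\<forall>x\<in>vecs n - K0. vnorm m (\<lambda>i. affine_app n m A c x i - f x i) < \<epsilon>"
    using Ac eps by blast
  obtain R where R: "R \<ge> 0" "\<forall>x\<in>K0. vnorm n x \<le> R" using compact_bound[OF K0(2)] by blast
  define C where "C = {x \<in> vecs n. vnorm n x \<le> R}"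
  have cC: "compact C" unfolding C_def using compact_C[OF R(1)] .
  have K0C: "K0 \<subseteq> C" using K0(1) R(2) unfolding C_def by auto
  have "\<forall>y\<in>vecs n. \<exists>r. 0 < r \<and> r < 1 \<and> (\<forall>x\<in>vecs n. vnorm n (\<lambda>i. x i - y i) < r \<longrightarrow> vnorm m (\<lambda>i. f x i - f y i) < \<epsilon>)"
  proof
    fix y assume y: "y \<in> vecs n"
    obtain \<delta> where d: "\<delta> > 0" "\<forall>x\<in>vecs n. vnorm n (\<lambda>i. x i - y i) < \<delta> \<longrightarrow> vnorm m (\<lambda>i. f x i - f y i) < \<epsilon>"
      using cont_eps[OF cont y eps] by blast
    show "\<exists>r. 0 < r \<and> r < 1 \<and> (\<forall>x\<in>vecs n. vnorm n (\<lambda>i. x i - y i) < r \<longrightarrow> vnorm m (\<lambda>i. f x i - f y i) < \<epsilon>)"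
      using d by (intro exI[of _ "min \<delta> (1/2)"]) auto
  qed
  then obtain rad where rad0: "\<forall>y\<in>vecs n. 0 < rad y \<and> rad y < 1 \<and>
      (\<forall>x\<in>vecs n. vnorm n (\<lambda>i. x i - y i) < rad y \<longrightarrow> vnorm m (\<lambda>i. f x i - f y i) < \<epsilon>)"
    by (rule bchoice[elim_format]) blast
  then have rad: "\<And>y. y \<in> vecs n \<Longrightarrow> 0 < rad y \<and> rad y < 1 \<and>
      (\<forall>x\<in>vecs n. vnorm n (\<lambda>i. x i - y i) < rad y \<longrightarrow> vnorm m (\<lambda>i. f x i - f y i) < \<epsilon>)"
    by blast
  have opn: "\<And>y. y \<in> C \<Longrightarrow> open {x. vnorm n (\<lambda>i. x i - y i) < rad y}" by (rule open_vb)
  have cov: "C \<subseteq> (\<Union>y\<in>C. {x. vnorm n (\<lambda>i. x i - y i) < rad y})"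
  proof
    fix x assume x: "x \<in> C"
    then have "vnorm n (\<lambda>i. x i - x i) < rad x" using rad[of x] by (auto simp: C_def vnorm_zero)
    then show "x \<in> (\<Union>y\<in>C. {x. vnorm n (\<lambda>i. x i - y i) < rad y})" using x by blast
  qed
  obtain D where D: "D \<subseteq> C" "finite D" "C \<subseteq> (\<Union>y\<in>D. {x. vnorm n (\<lambda>i. x i - y i) < rad y})"
    using compactE_image[OF cC opn cov] by blast
  obtain M :: nat and p where Mp: "D = p ` {i. i < M}"
    using finite_imp_nat_seg_image_inj_on[OF D(2)] by blast
  define rr where "rr = (\<lambda>j. rad (p j))"
  have pC: "\<And>j. j < M \<Longrightarrow> p j \<in> C" using Mp D(1) by auto
  have P: "\<forall>j<M. p j \<in> vecs n \<and> 0 < rr j \<and> rr j < 1"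
    using pC rad unfolding rr_def C_def by auto
  have pvar: "\<And>j x. j < M \<Longrightarrow> x \<in> vball n (p j) (rr j) \<Longrightarrow> vnorm m (\<lambda>i. f x i - f (p j) i) < \<epsilon>"
    using pC rad unfolding rr_def C_def vball_def by auto
  have covC: "\<And>x. x \<in> C \<Longrightarrow> \<exists>j<M. x \<in> vball n (p j) (rr j)"
  proof -
    fix x assume x: "x \<in> C"
    then obtain y where "y \<in> D" "vnorm n (\<lambda>i. x i - y i) < rad y" using D(3) by blast
    then obtain j where "j < M" "vnorm n (\<lambda>i. x i - p j i) < rr j" using Mp unfolding rr_def by auto
    then show "\<exists>j<M. x \<in> vball n (p j) (rr j)" using x unfolding vball_def C_def by auto
  qed
  define q where "q = (\<lambda>j::nat. \<lambda>i::nat. if i = 0 then R + 3 + 3 * real j else 0)"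
  define K where "K = C \<union> q ` {..<M}"
  have qv: "q j \<in> vecs n" for j using n1 by (auto simp: q_def vecs_def)
  have Kv: "K \<subseteq> vecs n" unfolding K_def C_def using qv by auto
  have cK: "compact K" unfolding K_def using cC by (intro compact_Un[OF cC] finite_imp_compact) auto
  have sepC: "\<not> vnorm n (\<lambda>i. x i - q j i) < 1" if x: "x \<in> C" for x j
  proof -
    have "\<bar>x 0\<bar> \<le> R" using x vnorm_coord[of 0 n x] n1 by (auto simp: C_def)
    then have "3 \<le> \<bar>x 0 - q j 0\<bar>" by (auto simp: q_def)
    then show ?thesis using coord0[OF n1, of x "q j"] by linarith
  qed
  have sepq: "\<bar>q l 0 - q j 0\<bar> < 2 \<Longrightarrow> l = j" for l j
    by (auto simp: q_def)
  have gc: "good_cover n m f K \<epsilon> (M + M)"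
    unfolding good_cover_def
  proof (intro exI[of _ "\<lambda>i. if i < M then p i else q (i - M)"] exI[of _ "\<lambda>i. if i < M then rr i else 1/2"] conjI allI impI ballI)
    fix i assume i: "i < M + M"
    show "(if i < M then p i else q (i - M)) \<in> K" using pC i unfolding K_def by auto
    show "0 < (if i < M then rr i else 1/2)" "(if i < M then rr i else 1/2) < 1" using P i by auto
  next
    show "K \<subseteq> (\<Union>i<M + M. vball n (if i < M then p i else q (i - M)) (if i < M then rr i else 1/2))"
    proof
      fix x assume "x \<in> K"
      then consider "x \<in> C" | l where "l < M" "x = q l" unfolding K_def by auto
      then show "x \<in> (\<Union>i<M + M. vball n (if i < M then p i else q (i - M)) (if i < M then rr i else 1/2))"
      proof cases
        case 1 then obtain j where "j < M" "x \<in> vball n (p j) (rr j)" using covC by blast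
        then show ?thesis by (intro UN_I[of j]) auto
      next
        case 2
        have "x \<in> vball n (q l) (1/2)" using 2 qv by (simp add: vball_def vnorm_zero)
        then show ?thesis using 2 by (intro UN_I[of "M + l"]) auto
      qed
    qed
  next
    fix i x assume i: "i < M + M" and x: "x \<in> vball n (if i < M then p i else q (i - M)) (if i < M then rr i else 1/2) \<inter> K"
    show "vnorm m (\<lambda>j. f x j - f (if i < M then p i else q (i - M)) j) < \<epsilon>"
    proof (cases "i < M")
      case True then show ?thesis using x pvar by auto
    next
      case False
      then have xb: "vnorm n (\<lambda>j. x j - q (i - M) j) < 1/2" "x \<in> K" using x by (auto simp: vball_def)
      have "x = q (i - M)"
      proof -
        have "x \<notin> C" using sepC[of x "i - M"] xb(1) by linarith
        then obtain l where l: "x = q l" using xb(2) unfolding K_def by auto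
        have "\<bar>q l 0 - q (i - M) 0\<bar> < 2" using coord0[OF n1, of x "q (i - M)"] xb l by simp
        then show ?thesis using sepq l by blast
      qed
      then show ?thesis using False eps by (simp add: vnorm_zero)
    qed
  qed
  define N where "N = Ncov n m f K \<epsilon>"
  have gN: "good_cover n m f K \<epsilon> N" unfolding N_def Ncov_def by (rule LeastI[of "good_cover n m f K \<epsilon>", OF gc])
  have MN: "M \<le> N"
  proof -
    obtain c' r' where cr: "\<forall>i<N. c' i \<in> K \<and> 0 < r' i \<and> r' i < 1"
      "K \<subseteq> (\<Union>i<N. vball n (c' i) (r' i))"
      using gN unfolding good_cover_def by blast
    have "\<forall>l\<in>{..<M}. \<exists>i. i < N \<and> q l \<in> vball n (c' i) (r' i)" using cr(2) unfolding K_def by blast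
    then obtain g where g0: "\<forall>l\<in>{..<M}. g l < N \<and> q l \<in> vball n (c' (g l)) (r' (g l))"
      by (rule bchoice[elim_format]) blast
    then have g: "\<And>l. l < M \<Longrightarrow> g l < N \<and> q l \<in> vball n (c' (g l)) (r' (g l))" by blast
    have "inj_on g {..<M}"
    proof (rule inj_onI)
      fix l l' assume l: "l \<in> {..<M}" "l' \<in> {..<M}" and e: "g l = g l'"
      have gl: "g l < N" "vnorm n (\<lambda>i. q l i - c' (g l) i) < r' (g l)" using g[of l] l by (auto simp: vball_def)
      have gl': "vnorm n (\<lambda>i. q l' i - c' (g l) i) < r' (g l)" using g[of l'] l e by (auto simp: vball_def)
      have r1: "r' (g l) < 1" using cr(1) gl(1) by blast
      have a: "\<bar>q l 0 - c' (g l) 0\<bar> < 1" using gl(2) r1 coord0[OF n1, of "q l" "c' (g l)"] by linarith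
      have b: "\<bar>q l' 0 - c' (g l) 0\<bar> < 1" using gl' r1 coord0[OF n1, of "q l'" "c' (g l)"] by linarith
      have "\<bar>q l 0 - q l' 0\<bar> < 2" using a b by linarith
      then show "l = l'" using sepq by blast
    qed
    moreover have "g ` {..<M} \<subseteq> {..<N}" using g by auto
    ultimately have "card {..<M} \<le> card {..<N}" by (intro card_inj_on_le) auto
    then show ?thesis by simp
  qed
  obtain F where F: "is_radial_nn_function (map (\<lambda>i. n + i) [0..<N+1] @ [m]) F"
    "\<forall>x\<in>vecs n. ((\<forall>j<M. x \<notin> vball n (p j) (rr j)) \<and> (\<forall>i<m. F x i = affine_app n m A c x i)) \<or>
                 (\<exists>j<M. x \<in> vball n (p j) (rr j) \<and> (\<forall>i<m. F x i = f (p j) i))"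
    using network[OF MN P, of m A c "\<lambda>j. f (p j)"] by blast
  have err: "vnorm m (\<lambda>i. F x i - f x i) < \<epsilon>" if x: "x \<in> vecs n" for x
    using F(2)[rule_format, OF x]
  proof
    assume a: "(\<forall>j<M. x \<notin> vball n (p j) (rr j)) \<and> (\<forall>i<m. F x i = affine_app n m A c x i)"
    then have "x \<notin> C" using covC by blast
    then have "x \<in> vecs n - K0" using K0C x by auto
    then have "vnorm m (\<lambda>i. affine_app n m A c x i - f x i) < \<epsilon>" using K0(3) by blast
    moreover have "vnorm m (\<lambda>i. F x i - f x i) = vnorm m (\<lambda>i. affine_app n m A c x i - f x i)"
      using a by (intro vnorm_cong) auto
    ultimately show ?thesis by simp
  next
    assume "\<exists>j<M. x \<in> vball n (p j) (rr j) \<and> (\<forall>i<m. F x i = f (p j) i)"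
    then obtain j where j: "j < M" "x \<in> vball n (p j) (rr j)" "\<forall>i<m. F x i = f (p j) i" by blast
    have "vnorm m (\<lambda>i. F x i - f x i) = vnorm m (\<lambda>i. f (p j) i - f x i)"
      using j by (intro vnorm_cong) auto
    also have "\<dots> = vnorm m (\<lambda>i. f x i - f (p j) i)" by (rule vnorm_sym)
    finally show ?thesis using pvar j by simp
  qed
  show ?thesis
    using Kv cK F(1) err unfolding N_def by blast
qed

end
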